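(* Let $U\subset\mathbb R^n$ be open, $X$ a $C^1$ vector field on $U$, $f=(f_0,f_1,\dots,f_\ell):U\to\mathbb R^{r+\ell}$ a $C^2$ map, $x_0\in U$, $K$ a constant symmetric positive definite $(r+\ell)\times(r+\ell)$ matrix, and $V(x)=\tfrac12(f(x)-f(x_0))^TK(f(x)-f(x_0))$. Assume $\nabla V(x)\cdot X(x)=0$ for all $x\in U$, $V^{-1}(0)$ is compact, and $Df(x)$ is onto for all $x\in V^{-1}(0)$. Then there is a number $c>0$ (and, if necessary, an open neighborhood $W\subset U$ of $V^{-1}(0)$ to which the system is restricted) such that every trajectory of $\dot x = X(x)-\nabla V(x)$ starting in $V^{-1}([0,c])$ remains in $V^{-1}([0,c])$ for all $t\ge0$ and converges to $V^{-1}(0)$ as $t\to\infty$. *)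

theory Defs
  imports "HOL-Analysis.Analysis"
begin

definition C1_on :: "'a::real_normed_vector set \<Rightarrow> ('a \<Rightarrow> 'b::real_normed_vector) \<Rightarrow> bool" where
  "C1_on U g \<longleftrightarrow> (\<exists>g'. (\<forall>x\<in>U. (g has_derivative blinfun_apply (g' x)) (at x)) \<and> continuous_on U g')"

definition C2_on :: "'a::real_normed_vector set \<Rightarrow> ('a \<Rightarrow> 'b::real_normed_vector) \<Rightarrow> bool" where
  "C2_on U g \<longleftrightarrow> (\<exists>g'. (\<forall>x\<in>U. (g has_derivative blinfun_apply (g' x)) (at x)) \<and> C1_on U g')"

definition sym_pos_def :: "real^'m^'m \<Rightarrow> bool" where
  "sym_pos_def K \<longleftrightarrow> transpose K = K \<and> (\<forall>v. v \<noteq> 0 \<longrightarrow> v \<bullet> (K *v v) > 0)"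

definition grad :: "(real^'n \<Rightarrow> real) \<Rightarrow> real^'n \<Rightarrow> real^'n" where
  "grad g x = (\<chi> i. frechet_derivative g (at x) (axis i 1))"

definition is_solution :: "(real^'n \<Rightarrow> real^'n) \<Rightarrow> (real^'n) set \<Rightarrow> real set \<Rightarrow> (real \<Rightarrow> real^'n) \<Rightarrow> bool" where
  "is_solution F W I y \<longleftrightarrow> (\<forall>t\<in>I. y t \<in> W \<and> (y has_vector_derivative F (y t)) (at t within I))"

end

theory Submission
  imports Defs "HOL-Analysis.Analysis"
begin

lemma integral_deriv_within_nonneg:
  fixes g :: "real \<Rightarrow> 'a::banach"
  assumes "continuous_on {0..} g" "t \<ge> 0"
  shows "((\<lambda>u. integral {0..u} g) has_vector_derivative g t) (at t within {0..})"
proof -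
  have "((\<lambda>u. integral {0..u} g) has_vector_derivative g t) (at t within {0..t+1})"
    by (rule integral_has_vector_derivative) (use assms in \<open>auto intro: continuous_on_subset\<close>)
  moreover have "at t within {0..t+1} = at t within {0..}"
    by (rule at_within_nhd[where S="{..<t+1}"]) auto
  ultimately show ?thesis by simp
qed

lemma integral_cont_nonneg:
  fixes g :: "real \<Rightarrow> 'a::banach"
  assumes "continuous_on {0..} g"
  shows "continuous_on UNIV (\<lambda>t. integral {0..max 0 t} g)"
proof -
  have "continuous_on {0..} (\<lambda>u. integral {0..u} g)"
    unfolding continuous_on_eq_continuous_within
    using integral_deriv_within_nonneg[OF assms] has_vector_derivative_continuous by blast
  then show ?thesis
    by (rule continuous_on_compose2[of "{0..}" _ UNIV "\<lambda>t. max 0 t"]) (auto intro: continuous_intros)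
qed

lemma exp_bound_aux: "(a::real) > 0 \<Longrightarrow> t \<ge> 0 \<Longrightarrow> t / exp (a * t) \<le> 1 / a"
proof -
  assume a: "a > 0" "t \<ge> 0"
  have "a * t \<le> exp (a*t)" using exp_ge_add_one_self[of "a*t"] by linarith
  then show ?thesis using a by (simp add: field_simps)
qed

lemma picard_global:
  fixes G :: "'a::banach \<Rightarrow> 'a"
  assumes lip: "L-lipschitz_on UNIV G" and Lpos: "L > 0" and bnd: "\<And>x. norm (G x) \<le> M"
  shows "\<exists>y. y 0 = p \<and> (\<forall>t\<ge>0. (y has_vector_derivative G (y t)) (at t within {0..}))"
proof -
  have M0: "M \<ge> 0" using bnd[of 0] norm_ge_zero[of "G 0"] by linarith
  have Gcont: "continuous_on UNIV G" using lipschitz_on_continuous_on[OF lip] .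
  define E where "E t = exp (2*L*max 0 t)" for t
  have Epos: "E t > 0" for t by (simp add: E_def)
  have Econt: "continuous_on UNIV E" unfolding E_def by (auto intro!: continuous_intros)
  define H where "H z s = G (E s *\<^sub>R apply_bcontfun z s)" for z :: "real \<Rightarrow>\<^sub>C 'a" and s
  have Hcont: "continuous_on A (H z)" for z A
    unfolding H_def
    by (rule continuous_on_compose2[OF Gcont]) (auto intro!: continuous_intros continuous_on_subset[OF Econt])
  define \<Phi> where "\<Phi> z t = (1 / E t) *\<^sub>R (p + integral {0..max 0 t} (H z))" for z t
  have Phi_bc: "\<Phi> z \<in> bcontfun" for z
  proof (rule bcontfun_normI)
    show "continuous_on UNIV (\<Phi> z)"
      unfolding \<Phi>_def using Epos[THEN less_imp_neq] Epos
      by (auto intro!: continuous_intros integral_cont_nonneg Hcont Econt)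
    fix t :: real
    have int: "norm (integral {0..max 0 t} (H z)) \<le> M * (max 0 t - 0)"
      using Hcont[where z=z] M0 by (intro integral_bound) (auto simp: H_def bnd)
    have E1: "E t \<ge> 1" using Lpos by (simp add: E_def)
    have "norm (\<Phi> z t) = (1 / E t) * norm (p + integral {0..max 0 t} (H z))"
      unfolding \<Phi>_def using Epos[of t] by simp
    also have "\<dots> \<le> (1 / E t) * (norm p + M * max 0 t)"
      using int norm_triangle_ineq[of p "integral {0..max 0 t} (H z)"] Epos[of t]
      by (intro mult_left_mono) auto
    also have "\<dots> = norm p / E t + M * (max 0 t / E t)" by (simp add: add_divide_distrib)
    also have "\<dots> \<le> norm p + M * (1 / (2*L))"
    proof (intro add_mono mult_left_mono M0)
      show "norm p / E t \<le> norm p" using E1 by (simp add: divide_le_eq mult_le_cancel_left1 order_trans[OF _ mult_right_mono])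
      show "max 0 t / E t \<le> 1 / (2*L)" unfolding E_def using exp_bound_aux[of "2*L" "max 0 t"] Lpos by simp
    qed
    finally show "norm (\<Phi> z t) \<le> norm p + M * (1 / (2*L))" .
  qed
  define \<Psi> where "\<Psi> z = Bcontfun (\<Phi> z)" for z
  have Psi_app: "apply_bcontfun (\<Psi> z) = \<Phi> z" for z
    unfolding \<Psi>_def using Phi_bc Bcontfun_inverse by blast
  have contr: "dist (\<Psi> z1) (\<Psi> z2) \<le> (1/2) * dist z1 z2" for z1 z2
  proof (rule dist_bound)
    fix t :: real
    define d where "d = dist z1 z2"
    define c where "c = max 0 t"
    have c0: "c \<ge> 0" unfolding c_def by linarith
    have "dist (\<Phi> z1 t) (\<Phi> z2 t) = (1 / E t) * norm (integral {0..c} (H z1) - integral {0..c} (H z2))"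
      unfolding \<Phi>_def dist_norm c_def using Epos[of t]
      by (simp add: algebra_simps flip: scaleR_diff_right)
    also have "integral {0..c} (H z1) - integral {0..c} (H z2) = integral {0..c} (\<lambda>s. H z1 s - H z2 s)"
      by (rule integral_diff[symmetric]) (auto intro!: integrable_continuous_real Hcont)
    also have "norm (integral {0..c} (\<lambda>s. H z1 s - H z2 s)) \<le> integral {0..c} (\<lambda>s. L * d * exp (2*L * s))"
    proof (rule integral_norm_bound_integral)
      show "(\<lambda>s. H z1 s - H z2 s) integrable_on {0..c}"
        by (auto intro!: integrable_continuous_real continuous_intros Hcont)
      show "(\<lambda>s. L * d * exp (2*L * s)) integrable_on {0..c}"
        by (auto intro!: integrable_continuous_real continuous_intros)
      fix s assume s: "s \<in> {0..c}"
      have "norm (H z1 s - H z2 s) \<le> L * dist (E s *\<^sub>R apply_bcontfun z1 s) (E s *\<^sub>R apply_bcontfun z2 s)"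
        unfolding H_def using lipschitz_onD[OF lip] by (simp add: dist_norm)
      also have "dist (E s *\<^sub>R apply_bcontfun z1 s) (E s *\<^sub>R apply_bcontfun z2 s) = E s * dist (apply_bcontfun z1 s) (apply_bcontfun z2 s)"
        using Epos[of s] by (simp add: dist_norm flip: scaleR_diff_right)
      also have "\<dots> \<le> E s * d" unfolding d_def using Epos[of s] dist_bounded by (intro mult_left_mono) auto
      also have "E s = exp (2*L * s)" using s by (simp add: E_def)
      finally show "norm (H z1 s - H z2 s) \<le> L * d * exp (2*L * s)" using Lpos by (simp add: mult_left_mono algebra_simps)
    qed
    also have "integral {0..c} (\<lambda>s. L * d * exp (2*L * s)) = d/2 * exp (2*L*c) - d/2 * exp (2*L*0)"
    proof (rule integral_unique, rule fundamental_theorem_of_calculus)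
      show "0 \<le> c" by (rule c0)
      fix s assume "s \<in> {0..c}"
      show "((\<lambda>s. d/2 * exp (2*L * s)) has_vector_derivative L * d * exp (2*L * s)) (at s within {0..c})"
        unfolding has_real_derivative_iff_has_vector_derivative[symmetric]
        by (auto intro!: derivative_eq_intros)
    qed
    also have "\<dots> \<le> d/2 * E t" unfolding E_def c_def d_def by simp
    finally have "dist (\<Phi> z1 t) (\<Phi> z2 t) \<le> (1 / E t) * (d/2 * E t)" using Epos[of t]
      by (smt (verit) divide_pos_pos mult_left_mono one_divide_eq_0_iff zero_le_divide_1_iff)
    then show "dist (apply_bcontfun (\<Psi> z1) t) (apply_bcontfun (\<Psi> z2) t) \<le> (1/2) * dist z1 z2"
      using Epos[of t] by (simp add: Psi_app d_def)
  qed
  obtain z where z: "\<Psi> z = z"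
    using banach_fix_type[of "1/2" \<Psi>] contr by auto
  have zeq: "apply_bcontfun z t = \<Phi> z t" for t using z Psi_app by metis
  define y where "y t = p + integral {0..t} (H z)" for t
  show ?thesis
  proof (intro exI conjI allI impI)
    show "y 0 = p" by (simp add: y_def)
    fix t :: real assume t: "t \<ge> 0"
    have "E t *\<^sub>R apply_bcontfun z t = y t"
      using zeq[of t] Epos[of t] t by (simp add: \<Phi>_def y_def)
    then have "H z t = G (y t)" by (simp add: H_def)
    moreover have "(y has_vector_derivative H z t) (at t within {0..})"
      unfolding y_def
      by (rule derivative_eq_intros integral_deriv_within_nonneg Hcont t | simp)+
    ultimately show "(y has_vector_derivative G (y t)) (at t within {0..})" by simp
  qed
qed

lemma sym_inner:
  fixes K :: "real^'m^'m"
  assumes "transpose K = K"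
  shows "u \<bullet> (K *v v) = v \<bullet> (K *v u)"
proof -
  have Kij: "K $ i $ j = K $ j $ i" for i j
    using assms by (metis transpose_def vec_lambda_beta)
  have "u \<bullet> (K *v v) = (\<Sum>i\<in>UNIV. \<Sum>j\<in>UNIV. u $ i * K $ i $ j * v $ j)"
    by (simp add: inner_vec_def matrix_vector_mult_def sum_distrib_left mult.assoc)
  also have "\<dots> = (\<Sum>j\<in>UNIV. \<Sum>i\<in>UNIV. u $ i * K $ i $ j * v $ j)"
    by (rule sum.swap)
  also have "\<dots> = v \<bullet> (K *v u)"
    by (simp add: inner_vec_def matrix_vector_mult_def sum_distrib_left Kij mult.commute mult.left_commute)
  finally show ?thesis .
qed

lemma linear_expand:
  fixes L :: "real^'n \<Rightarrow> 'b::real_normed_vector"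
  assumes "linear L"
  shows "L h = (\<Sum>i\<in>UNIV. h $ i *\<^sub>R L (axis i 1))"
proof -
  have "h = (\<Sum>i\<in>UNIV. h $ i *\<^sub>R axis i 1)"
    using basis_expansion[of h] by (simp add: scalar_mult_eq_scaleR)
  then have "L h = L (\<Sum>i\<in>UNIV. h $ i *\<^sub>R axis i 1)" by simp
  also have "\<dots> = (\<Sum>i\<in>UNIV. h $ i *\<^sub>R L (axis i 1))"
    using assms by (simp add: linear_sum linear_scale)
  finally show ?thesis .
qed

lemma lin_inner_grad:
  fixes L :: "real^'n \<Rightarrow> 'b::real_inner"
  assumes "linear L"
  shows "L h \<bullet> w = h \<bullet> (\<chi> i. L (axis i 1) \<bullet> w)"
  by (subst linear_expand[OF assms]) (simp add: inner_sum_left inner_vec_def)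

lemma decreasing_deriv:
  fixes g :: "real \<Rightarrow> real"
  assumes "a \<le> b" "continuous_on {a..b} g"
    and "\<And>t. a < t \<Longrightarrow> t < b \<Longrightarrow> (g has_real_derivative g' t) (at t)"
    and "\<And>t. a < t \<Longrightarrow> t < b \<Longrightarrow> g' t \<le> - m"
  shows "g b \<le> g a - m * (b - a)"
proof (cases "a = b")
  case True then show ?thesis by simp
next
  case False
  then have ab: "a < b" using assms(1) by simp
  have "\<And>t. a < t \<Longrightarrow> t < b \<Longrightarrow> (g has_derivative (\<lambda>h. g' t * h)) (at t)"
    using assms(3) by (simp add: has_field_derivative_def)
  from mvt[OF ab assms(2) this] obtain \<xi> where xi: "a < \<xi>" "\<xi> < b" "g b - g a = g' \<xi> * (b - a)"
    by blast
  have "g' \<xi> * (b - a) \<le> -m * (b - a)" using assms(4)[OF xi(1,2)] ab by (intro mult_right_mono) auto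
  then show ?thesis using xi(3) by simp
qed

lemma lipschitz_inner:
  fixes a b :: "'x::metric_space \<Rightarrow> 'v::real_inner"
  assumes "A-lipschitz_on S a" "B-lipschitz_on S b"
    and "\<And>x. x \<in> S \<Longrightarrow> norm (a x) \<le> Ma" "\<And>x. x \<in> S \<Longrightarrow> norm (b x) \<le> Mb"
    and Ma0: "0 \<le> Ma" and Mb0: "0 \<le> Mb"
  shows "(A * Mb + Ma * B)-lipschitz_on S (\<lambda>x. a x \<bullet> b x)"
proof (rule lipschitz_onI)
  show "0 \<le> A * Mb + Ma * B" using lipschitz_on_nonneg[OF assms(1)] lipschitz_on_nonneg[OF assms(2)] Ma0 Mb0 by simp
  have A0: "A \<ge> 0" and B0: "B \<ge> 0" using assms(1,2) lipschitz_on_nonneg by auto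
  fix x y assume x: "x \<in> S" and y: "y \<in> S"
  have eq: "a x \<bullet> b x - a y \<bullet> b y = (a x - a y) \<bullet> b x + a y \<bullet> (b x - b y)"
    by (simp add: algebra_simps inner_diff_left inner_diff_right)
  have "dist (a x \<bullet> b x) (a y \<bullet> b y) = \<bar>(a x - a y) \<bullet> b x + a y \<bullet> (b x - b y)\<bar>"
    by (simp add: dist_real_def eq)
  also have "\<dots> \<le> norm (a x - a y) * norm (b x) + norm (a y) * norm (b x - b y)"
    by (smt (verit) Cauchy_Schwarz_ineq2)
  also have "\<dots> \<le> (A * dist x y) * Mb + Ma * (B * dist x y)"
    using lipschitz_onD[OF assms(1) x y] lipschitz_onD[OF assms(2) x y] assms(3)[OF y] assms(4)[OF x] A0 B0 Ma0 Mb0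
    by (intro add_mono mult_mono) (auto simp: dist_norm)
  finally show "dist (a x \<bullet> b x) (a y \<bullet> b y) \<le> (A * Mb + Ma * B) * dist x y"
    by (simp add: algebra_simps)
qed

lemma c1_lip:
  fixes g :: "'a::euclidean_space \<Rightarrow> 'b::real_normed_vector"
  assumes "\<forall>y\<in>C. (g has_derivative blinfun_apply (g' y)) (at y)" "continuous_on C g'" "compact C" "convex C"
  shows "\<exists>L. L-lipschitz_on C g"
proof -
  have "compact (g' ` C)" using assms by (intro compact_continuous_image)
  then obtain B where B: "B > 0" "\<And>y. y \<in> C \<Longrightarrow> norm (g' y) \<le> B"
    by (auto dest!: compact_imp_bounded simp: bounded_pos)
  have "B-lipschitz_on C g"
  proof (rule bounded_derivative_imp_lipschitz[where f'="\<lambda>y. blinfun_apply (g' y)"])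
    show "\<And>x. x \<in> C \<Longrightarrow> (g has_derivative blinfun_apply (g' x)) (at x within C)"
      using assms(1) by (auto intro: has_derivative_at_withinI)
    show "convex C" by fact
    show "\<And>x. x \<in> C \<Longrightarrow> onorm (blinfun_apply (g' x)) \<le> B" using B by (simp add: norm_blinfun.rep_eq[symmetric])
    show "0 \<le> B" using B by simp
  qed
  then show ?thesis by blast
qed

lemma clip_lip: "\<bar>max 0 (min 1 a) - max 0 (min 1 b)\<bar> \<le> \<bar>a - b\<bar>" for a b :: real
  by (simp add: abs_if max_def min_def)

lemma cutoff_ext:
  fixes F :: "'a::metric_space \<Rightarrow> 'b::real_normed_vector"
  assumes lip: "B-lipschitz_on {x. infdist x Z \<le> 2*r} F"
    and bnd: "\<And>x. infdist x Z \<le> 2*r \<Longrightarrow> norm (F x) \<le> M" and r: "r > 0" and M0: "M \<ge> 0"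
  shows "\<exists>G L. L-lipschitz_on UNIV G \<and> (\<forall>x. norm (G x) \<le> M) \<and> (\<forall>x. infdist x Z \<le> r \<longrightarrow> G x = F x)"
proof -
  define N where "N = {x. infdist x Z \<le> 2*r}"
  define \<phi> where "\<phi> x = max 0 (min 1 (2 - infdist x Z / r))" for x
  define G where "G x = \<phi> x *\<^sub>R F x" for x
  have B0: "B \<ge> 0" using lip lipschitz_on_nonneg by blast
  have phi01: "0 \<le> \<phi> x" "\<phi> x \<le> 1" for x by (auto simp: \<phi>_def)
  have phi_out: "\<phi> x = 0" if "x \<notin> N" for x
  proof -
    have "infdist x Z > 2*r" using that by (simp add: N_def)
    then have "infdist x Z / r > 2" using r by (simp add: field_simps)
    then show ?thesis by (simp add: \<phi>_def)
  qed
  have phi_in: "\<phi> x = 1" if "infdist x Z \<le> r" for x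
  proof -
    have "infdist x Z / r \<le> 1" using that r by (simp add: field_simps)
    then show ?thesis by (simp add: \<phi>_def)
  qed
  have phi_lip: "\<bar>\<phi> x - \<phi> y\<bar> \<le> dist x y / r" for x y
  proof -
    have "\<bar>\<phi> x - \<phi> y\<bar> \<le> \<bar>(2 - infdist x Z / r) - (2 - infdist y Z / r)\<bar>"
      unfolding \<phi>_def by (rule clip_lip)
    also have "\<dots> = \<bar>infdist x Z - infdist y Z\<bar> / r" using r
      by (simp add: diff_divide_distrib[symmetric] abs_minus_commute)
    also have "\<dots> \<le> dist x y / r" using r infdist_triangle_abs[of x Z y] by (intro divide_right_mono) auto
    finally show ?thesis .
  qed
  have case1: "dist (G x) (G y) \<le> (M / r + B) * dist x y" if x: "x \<in> N" and y: "y \<in> N" for x y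
  proof -
    have "G x - G y = (\<phi> x - \<phi> y) *\<^sub>R F x + \<phi> y *\<^sub>R (F x - F y)"
      by (simp add: G_def algebra_simps)
    then have "dist (G x) (G y) \<le> \<bar>\<phi> x - \<phi> y\<bar> * norm (F x) + \<bar>\<phi> y\<bar> * norm (F x - F y)"
      by (metis dist_norm norm_scaleR norm_triangle_ineq)
    also have "\<dots> \<le> (dist x y / r) * M + 1 * (B * dist x y)"
      using phi_lip[of x y] bnd[of x] x y phi01[of y] lipschitz_onD[OF lip, of x y]
      by (intro add_mono mult_mono) (auto simp: N_def dist_norm)
    finally show ?thesis by (simp add: algebra_simps)
  qed
  have case2: "dist (G x) (G y) \<le> (M / r + B) * dist x y" if x: "x \<in> N" and y: "y \<notin> N" for x y
  proof -
    have "dist (G x) (G y) = \<bar>\<phi> x - \<phi> y\<bar> * norm (F x)"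
      using phi_out[OF y] phi01[of x] by (simp add: G_def dist_norm)
    also have "\<dots> \<le> (dist x y / r) * M"
      using phi_lip[of x y] bnd[of x] x by (intro mult_mono) (auto simp: N_def)
    also have "\<dots> \<le> (M / r + B) * dist x y" using B0 by (simp add: algebra_simps)
    finally show ?thesis .
  qed
  have "(M / r + B)-lipschitz_on UNIV G"
  proof (rule lipschitz_onI)
    show "0 \<le> M / r + B" using M0 r B0 by simp
    fix x y :: 'a
    consider "x \<in> N" "y \<in> N" | "x \<in> N" "y \<notin> N" | "x \<notin> N" "y \<in> N" | "x \<notin> N" "y \<notin> N" by blast
    then show "dist (G x) (G y) \<le> (M / r + B) * dist x y"
    proof cases
      case 1 then show ?thesis by (rule case1)
    next
      case 2 then show ?thesis by (rule case2)
    next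
      case 3 then show ?thesis using case2[of y x] by (simp add: dist_commute)
    next
      case 4 then show ?thesis using phi_out M0 r B0 by (simp add: G_def)
    qed
  qed
  moreover have "norm (G x) \<le> M" for x
  proof (cases "x \<in> N")
    case True
    then have "\<phi> x * norm (F x) \<le> 1 * M" using phi01[of x] bnd[of x]
      by (intro mult_mono) (auto simp: N_def)
    then show ?thesis using phi01[of x] by (simp add: G_def)
  next
    case False then show ?thesis using phi_out M0 by (simp add: G_def)
  qed
  moreover have "\<forall>x. infdist x Z \<le> r \<longrightarrow> G x = F x" using phi_in by (simp add: G_def)
  ultimately show ?thesis by blast
qed

lemma pos_min:
  fixes h :: "'a::topological_space \<Rightarrow> real"
  assumes "compact S" "continuous_on S h" "\<And>x. x \<in> S \<Longrightarrow> 0 < h x"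
  shows "\<exists>\<eta>>0. \<forall>x\<in>S. \<eta> \<le> h x"
proof (cases "S = {}")
  case True then show ?thesis by (auto intro: exI[of _ 1])
next
  case False
  from continuous_attains_inf[OF assms(1) False assms(2)] obtain x where "x \<in> S" "\<forall>y\<in>S. h x \<le> h y" by blast
  then show ?thesis using assms(3) by blast
qed

theorem theorem3:
  fixes U :: "(real^'n) set"
    and X :: "real^'n \<Rightarrow> real^'n"
    and f :: "real^'n \<Rightarrow> real^'m"
    and x0 :: "real^'n"
    and K :: "real^'m^'m"
    and V :: "real^'n \<Rightarrow> real"
  assumes "open U"
    and "C1_on U X"
    and "C2_on U f"
    and "x0 \<in> U"
    and "sym_pos_def K"
    and V_def: "\<And>x. V x = (1/2) * ((f x - f x0) \<bullet> (K *v (f x - f x0)))"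
    and "\<forall>x\<in>U. grad V x \<bullet> X x = 0"
    and "compact {x\<in>U. V x = 0}"
    and "\<forall>x\<in>{x\<in>U. V x = 0}. surj (frechet_derivative f (at x))"
  shows "\<exists>c>0. \<exists>W. open W \<and> W \<subseteq> U \<and> {x\<in>U. V x = 0} \<subseteq> W \<and>
    (\<forall>p\<in>{x\<in>W. 0 \<le> V x \<and> V x \<le> c}.
       (\<exists>y. y 0 = p \<and> is_solution (\<lambda>x. X x - grad V x) W {0..} y) \<and>
       (\<forall>y. y 0 = p \<and> is_solution (\<lambda>x. X x - grad V x) W {0..} y \<longrightarrow>
          (\<forall>t\<ge>0. 0 \<le> V (y t) \<and> V (y t) \<le> c) \<and>
          ((\<lambda>t. infdist (y t) {x\<in>U. V x = 0}) \<longlongrightarrow> 0) at_top))"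
proof -
  note oU = assms(1) and x0U = assms(4) and gradX = assms(7) and surjZ = assms(9)
  define Z where "Z = {x\<in>U. V x = 0}"
  have cZ: "compact Z" using assms(8) by (simp add: Z_def)
  obtain X' where X': "\<forall>x\<in>U. (X has_derivative blinfun_apply (X' x)) (at x)" "continuous_on U X'"
    using assms(2) by (auto simp: C1_on_def)
  obtain f' f'' where f': "\<forall>x\<in>U. (f has_derivative blinfun_apply (f' x)) (at x)"
    and f'': "\<forall>x\<in>U. (f' has_derivative blinfun_apply (f'' x)) (at x)" "continuous_on U f''"
    using assms(3) by (auto simp: C2_on_def C1_on_def)
  have f'cont: "continuous_on U f'"
    using f''(1) by (intro continuous_at_imp_continuous_on) (auto intro: has_derivative_continuous)
  have fcont: "continuous_on U f"
    using f' by (intro continuous_at_imp_continuous_on) (auto intro: has_derivative_continuous)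
  have Xcont: "continuous_on U X"
    using X'(1) by (intro continuous_at_imp_continuous_on) (auto intro: has_derivative_continuous)
  have KT: "transpose K = K" and Kpos: "\<And>v. v \<noteq> 0 \<Longrightarrow> v \<bullet> (K *v v) > 0"
    using assms(5) by (auto simp: sym_pos_def_def)
  define w where "w x = K *v (f x - f x0)" for x
  have Kbl: "bounded_linear ((*v) K)"
    by (simp add: linear_conv_bounded_linear matrix_vector_mul_linear)
  have V0: "V x \<ge> 0" for x
    using Kpos[of "f x - f x0"] by (cases "f x - f x0 = 0") (auto simp: V_def)
  have Veq: "V = (\<lambda>x. (1/2) * ((f x - f x0) \<bullet> (K *v (f x - f x0))))"
    using V_def by auto
  have DV: "(V has_derivative (\<lambda>h. blinfun_apply (f' x) h \<bullet> w x)) (at x)" if x: "x \<in> U" for x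
  proof -
    have "(V has_derivative (\<lambda>h. (1/2) * ((f x - f x0) \<bullet> (K *v blinfun_apply (f' x) h) + blinfun_apply (f' x) h \<bullet> (K *v (f x - f x0))))) (at x)"
      unfolding Veq using f' x
      by (auto intro!: derivative_eq_intros bounded_linear.has_derivative[OF Kbl])
    moreover have "(1/2) * ((f x - f x0) \<bullet> (K *v blinfun_apply (f' x) h) + blinfun_apply (f' x) h \<bullet> (K *v (f x - f x0))) = blinfun_apply (f' x) h \<bullet> w x" for h
      using sym_inner[OF KT, of "f x - f x0" "blinfun_apply (f' x) h"] by (simp add: w_def)
    ultimately show ?thesis by simp
  qed
  define gr where "gr x = (\<chi> i. blinfun_apply (f' x) (axis i 1) \<bullet> w x)" for x
  have DV_gr: "blinfun_apply (f' x) h \<bullet> w x = h \<bullet> gr x" for x h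
    unfolding gr_def by (rule lin_inner_grad) (simp add: blinfun.bounded_linear_right bounded_linear.linear)
  have grad_eq: "grad V x = gr x" if "x \<in> U" for x
  proof -
    have "frechet_derivative V (at x) = (\<lambda>h. blinfun_apply (f' x) h \<bullet> w x)"
      using frechet_derivative_at[OF DV[OF that]] by simp
    then show ?thesis by (simp add: grad_def gr_def)
  qed
  have wcont: "continuous_on U w"
    unfolding w_def by (intro bounded_linear.continuous_on[OF Kbl] continuous_intros fcont)
  have grcont: "continuous_on U gr"
    unfolding gr_def by (intro continuous_intros f'cont wcont)
  have Vcont: "continuous_on U V"
    using DV by (intro continuous_at_imp_continuous_on) (auto intro: has_derivative_continuous)
  have x0Z: "x0 \<in> Z" using x0U by (simp add: Z_def V_def)
  then have Zne: "Z \<noteq> {}" by auto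
  have ZU: "Z \<subseteq> U" by (auto simp: Z_def)
  have clZ: "closed Z" using cZ by (rule compact_imp_closed)
  define F where "F x = X x - grad V x" for x
  have keyF: "blinfun_apply (f' x) (F x) \<bullet> w x = - ((norm (gr x))^2)" if "x \<in> U" for x
  proof -
    have "blinfun_apply (f' x) (F x) \<bullet> w x = (X x - gr x) \<bullet> gr x"
      using DV_gr grad_eq[OF that] by (simp add: F_def)
    also have "\<dots> = - ((norm (gr x))^2)"
      using gradX that grad_eq[OF that] by (simp add: inner_diff_left inner_diff_right inner_commute power2_norm_eq_inner) (metis inner_commute)
    finally show ?thesis .
  qed
  have chain: "((\<lambda>t. V (y t)) has_real_derivative - ((norm (gr (y t)))^2)) (at t)"
    if "(y has_vector_derivative F (y t)) (at t)" "y t \<in> U" for y t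
  proof -
    have "((V \<circ> y) has_derivative ((\<lambda>h. blinfun_apply (f' (y t)) h \<bullet> w (y t)) \<circ> (\<lambda>h. h *\<^sub>R F (y t)))) (at t)"
      using that(1) DV[OF that(2)] unfolding has_vector_derivative_def by (rule diff_chain_at)
    moreover have "((\<lambda>h. blinfun_apply (f' (y t)) h \<bullet> w (y t)) \<circ> (\<lambda>h. h *\<^sub>R F (y t))) = (\<lambda>h. h * (- ((norm (gr (y t)))^2)))"
      using keyF[OF that(2)] by (auto simp: blinfun.scaleR_right)
    ultimately have "((\<lambda>t. V (y t)) has_derivative (\<lambda>h. h * (- ((norm (gr (y t)))^2)))) (at t)"
      by (simp add: o_def)
    then show ?thesis unfolding has_field_derivative_def
      by (rule has_derivative_eq_rhs) (auto simp: fun_eq_iff)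
  qed
  obtain r0 where r0: "r0 > 0" "\<And>x. infdist x Z \<le> r0 \<Longrightarrow> x \<in> U"
  proof -
    have "closed (-U)" using oU by (simp add: closed_Compl)
    from separate_compact_closed[OF cZ this] ZU obtain \<delta> where d: "\<delta> > 0" "\<forall>x\<in>Z. \<forall>y\<in>-U. \<delta> \<le> dist x y"
      by blast
    have "x \<in> U" if "infdist x Z \<le> \<delta>/2" for x
    proof (rule ccontr)
      assume "x \<notin> U"
      obtain z where z: "z \<in> Z" "infdist x Z = dist x z" using infdist_attains_inf[OF clZ Zne] by blast
      have "\<delta> \<le> dist z x" using d z \<open>x \<notin> U\<close> by auto
      then show False using z that d by (simp add: dist_commute)
    qed
    then show thesis using that[of "\<delta>/2"] d by auto
  qed
  define g where "g x v = (\<chi> i. blinfun_apply (f' x) (axis i 1) \<bullet> v)" for x v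
  have gr_g: "gr x = g x (w x)" for x by (simp add: gr_def g_def)
  have g_lin: "blinfun_apply (f' x) h \<bullet> v = h \<bullet> g x v" for x h v
    unfolding g_def by (rule lin_inner_grad) (simp add: blinfun.bounded_linear_right bounded_linear.linear)
  have g_scale: "g x (a *\<^sub>R v) = a *\<^sub>R g x v" for x a v
    by (simp add: g_def vec_eq_iff)
  define N0 where "N0 = {x. infdist x Z \<le> r0}"
  have cN0: "compact N0" unfolding N0_def using compact_infdist_le[OF Zne cZ r0(1)] .
  have N0U: "N0 \<subseteq> U" using r0 by (auto simp: N0_def)
  obtain \<delta>1 where d1: "\<delta>1 > 0" "\<And>x v. infdist x Z < \<delta>1 \<Longrightarrow> infdist x Z \<le> r0 \<Longrightarrow> v \<noteq> 0 \<Longrightarrow> g x v \<noteq> 0"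
  proof -
    define S1 where "S1 = sphere (0::real^'m) 1"
    define A where "A = Z \<times> S1"
    define B where "B = (N0 \<times> S1) \<inter> (\<lambda>p. g (fst p) (snd p)) -` {0}"
    have cA: "compact A" unfolding A_def S1_def by (intro compact_Times cZ compact_sphere)
    have gcont: "continuous_on (N0 \<times> S1) (\<lambda>p. g (fst p) (snd p))"
      unfolding g_def
      by (intro continuous_intros continuous_on_compose2[OF f'cont]) (use N0U in auto)
    have clB: "closed B" unfolding B_def
      by (rule continuous_closed_preimage[OF gcont]) (auto intro!: closed_Times compact_imp_closed[OF cN0] simp: S1_def)
    have AB: "A \<inter> B = {}"
    proof (rule ccontr)
      assume "A \<inter> B \<noteq> {}"
      then obtain z v where zv: "z \<in> Z" "v \<in> S1" "g z v = 0" by (auto simp: A_def B_def)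
      have "frechet_derivative f (at z) = blinfun_apply (f' z)"
        using frechet_derivative_at[OF bspec[OF f'] ] zv ZU by auto
      then have "surj (blinfun_apply (f' z))" using surjZ zv(1) by (auto simp: Z_def)
      then obtain h where "blinfun_apply (f' z) h = v" by (metis surjD)
      then have "v \<bullet> v = h \<bullet> g z v" using g_lin[of z h v] by simp
      also have "\<dots> = 0" using zv by simp
      finally show False using zv(2) by (simp add: S1_def)
    qed
    from separate_compact_closed[OF cA clB AB] obtain \<delta> where d: "\<delta> > 0" "\<forall>a\<in>A. \<forall>b\<in>B. \<delta> \<le> dist a b"
      by blast
    have "g x v \<noteq> 0" if x: "infdist x Z < \<delta>" "infdist x Z \<le> r0" and v: "v \<noteq> 0" for x v
    proof
      assume gv: "g x v = 0"
      define v' where "v' = (1 / norm v) *\<^sub>R v"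
      have v'S: "v' \<in> S1" using v by (simp add: v'_def S1_def)
      have "g x v' = 0" using gv by (simp add: v'_def g_scale)
      then have "(x, v') \<in> B" using v'S x by (simp add: B_def N0_def)
      obtain z where z: "z \<in> Z" "infdist x Z = dist x z" using infdist_attains_inf[OF clZ Zne] by blast
      have "(z, v') \<in> A" using z v'S by (simp add: A_def)
      then have "\<delta> \<le> dist (z, v') (x, v')" using d \<open>(x, v') \<in> B\<close> by blast
      also have "\<dots> = dist z x" by (simp add: dist_Pair_Pair)
      finally show False using z x by (simp add: dist_commute)
    qed
    then show thesis using that d by blast
  qed
  define \<rho> where "\<rho> = min r0 \<delta>1"
  have rho: "\<rho> > 0" "\<rho> \<le> r0" using r0 d1 by (auto simp: \<rho>_def)
  have gr_ne: "gr x \<noteq> 0" if "infdist x Z < \<rho>" "V x > 0" for x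
  proof -
    have "w x \<noteq> 0" using that(2) by (auto simp: V_def w_def)
    then show ?thesis using d1(2)[of x "w x"] that(1) by (simp add: gr_g \<rho>_def)
  qed
  define r where "r = \<rho> / 4"
  have r: "r > 0" "2 * r < \<rho>" using rho by (auto simp: r_def)
  have F_gr: "F x = X x - gr x" if "x \<in> U" for x by (simp add: F_def grad_eq[OF that])
  have loclip: "\<exists>u>0. \<exists>L. L-lipschitz_on (cball x u) F" if x: "x \<in> U" for x
  proof -
    obtain u where u: "u > 0" "cball x u \<subseteq> U" using open_contains_cball oU x by blast
    define C where "C = cball x u"
    have cC: "compact C" "convex C" "C \<subseteq> U" using u by (auto simp: C_def)
    obtain LX where LX: "LX-lipschitz_on C X"
      using c1_lip[of C X X'] X' cC by (auto intro: continuous_on_subset)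
    obtain Lf where Lf: "Lf-lipschitz_on C f"
      using c1_lip[of C f f'] f' f'cont cC by (auto intro: continuous_on_subset)
    obtain Lf' where Lf': "Lf'-lipschitz_on C f'"
      using c1_lip[of C f' f''] f'' cC by (auto intro: continuous_on_subset)
    have "compact (f' ` C)" using cC f'cont by (intro compact_continuous_image) (auto intro: continuous_on_subset)
    then obtain Mf' where Mf': "Mf' > 0" "\<And>y. y \<in> C \<Longrightarrow> norm (f' y) \<le> Mf'"
      by (auto dest!: compact_imp_bounded simp: bounded_pos)
    have "compact (w ` C)" using cC wcont by (intro compact_continuous_image) (auto intro: continuous_on_subset)
    then obtain Mw where Mw: "Mw > 0" "\<And>y. y \<in> C \<Longrightarrow> norm (w y) \<le> Mw"
      by (auto dest!: compact_imp_bounded simp: bounded_pos)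
    obtain BK where BK: "BK > 0" "\<And>v. norm (K *v v) \<le> norm v * BK"
      using bounded_linear.pos_bounded[OF Kbl] by blast
    have Lw: "(Lf * BK)-lipschitz_on C w"
    proof (rule lipschitz_onI)
      show "0 \<le> Lf * BK" using lipschitz_on_nonneg[OF Lf] BK by simp
      fix y z assume yz: "y \<in> C" "z \<in> C"
      have "dist (w y) (w z) = norm (K *v (f y - f z))"
        by (simp add: w_def dist_norm matrix_vector_mult_diff_distrib)
      also have "\<dots> \<le> norm (f y - f z) * BK" by (rule BK(2))
      also have "\<dots> \<le> (Lf * dist y z) * BK"
        using lipschitz_onD[OF Lf yz] BK by (intro mult_right_mono) (auto simp: dist_norm)
      finally show "dist (w y) (w z) \<le> Lf * BK * dist y z" by (simp add: algebra_simps)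
    qed
    have La: "Lf'-lipschitz_on C (\<lambda>y. blinfun_apply (f' y) (axis i 1))" for i
    proof (rule lipschitz_onI)
      show "0 \<le> Lf'" by (rule lipschitz_on_nonneg[OF Lf'])
      fix y z assume yz: "y \<in> C" "z \<in> C"
      have "dist (blinfun_apply (f' y) (axis i 1)) (blinfun_apply (f' z) (axis i 1)) = norm (blinfun_apply (f' y - f' z) (axis i 1))"
        by (simp add: dist_norm blinfun.diff_left)
      also have "\<dots> \<le> norm (f' y - f' z) * norm (axis i (1::real))" by (rule norm_blinfun)
      also have "\<dots> = dist (f' y) (f' z)" by (simp add: dist_norm)
      also have "\<dots> \<le> Lf' * dist y z" by (rule lipschitz_onD[OF Lf' yz])
      finally show "dist (blinfun_apply (f' y) (axis i 1)) (blinfun_apply (f' z) (axis i 1)) \<le> Lf' * dist y z" .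
    qed
    have Ma: "norm (blinfun_apply (f' y) (axis i 1)) \<le> Mf'" if "y \<in> C" for y i
      using norm_blinfun[of "f' y" "axis i 1"] Mf'(2)[OF that] by simp
    define Li where "Li = Lf' * Mw + Mf' * (Lf * BK)"
    have Lc: "Li-lipschitz_on C (\<lambda>y. gr y $ i)" for i
      unfolding gr_def Li_def using lipschitz_inner[OF La Lw Ma Mw(2)] Mf'(1) Mw(1) by simp
    have Lgr: "(CARD('n) * Li)-lipschitz_on C gr"
    proof (rule lipschitz_onI)
      show "0 \<le> CARD('n) * Li" using lipschitz_on_nonneg[OF Lc] by simp
      fix y z assume yz: "y \<in> C" "z \<in> C"
      have "dist (gr y) (gr z) \<le> (\<Sum>i\<in>UNIV. \<bar>(gr y - gr z) $ i\<bar>)"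
        unfolding dist_norm by (rule norm_le_l1_cart)
      also have "\<dots> \<le> (\<Sum>i\<in>(UNIV::'n set). Li * dist y z)"
        by (rule sum_mono) (use lipschitz_onD[OF Lc yz] in \<open>simp add: dist_real_def\<close>)
      also have "\<dots> = CARD('n) * Li * dist y z" by simp
      finally show "dist (gr y) (gr z) \<le> CARD('n) * Li * dist y z" .
    qed
    have "(LX + CARD('n) * Li)-lipschitz_on C (\<lambda>y. X y - gr y)" by (rule lipschitz_on_diff[OF LX Lgr])
    then have "(LX + CARD('n) * Li)-lipschitz_on C F"
      by (rule lipschitz_on_transform) (use cC F_gr in auto)
    then show ?thesis using u by (auto simp: C_def)
  qed
  define N where "N = {x. infdist x Z \<le> 2*r}"
  have cN: "compact N" unfolding N_def using compact_infdist_le[OF Zne cZ, of "2*r"] r by simp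
  have NU: "N \<subseteq> U" using r rho r0 by (auto simp: N_def)
  have ll: "local_lipschitz {0::real} U (\<lambda>_. F)"
  proof (rule local_lipschitzI)
    fix t :: real and x assume "t \<in> {0::real}" "x \<in> U"
    obtain u L where "u>0" "L-lipschitz_on (cball x u) F" using loclip \<open>x\<in>U\<close> by blast
    then show "\<exists>u>0. \<exists>L. \<forall>t\<in>cball t u \<inter> {0}. L-lipschitz_on (cball x u \<inter> U) F"
      by (auto intro: lipschitz_on_subset)
  qed
  have "local_lipschitz {0::real} N (\<lambda>_. F)" using NU by (intro local_lipschitz_subset[OF ll]) auto
  then obtain LF where LF: "LF-lipschitz_on N F"
    by (rule local_lipschitz_compact_implies_lipschitz) (use cN in auto)
  have Fcont: "continuous_on U F"
    by (rule continuous_on_eq[of U "\<lambda>x. X x - gr x"]) (auto intro: continuous_intros Xcont grcont simp: F_gr)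
  have "compact (F ` N)" using cN NU Fcont by (intro compact_continuous_image) (auto intro: continuous_on_subset)
  then obtain M where M: "M > 0" "\<And>x. x \<in> N \<Longrightarrow> norm (F x) \<le> M"
    by (auto dest!: compact_imp_bounded simp: bounded_pos)
  obtain G LG where G: "LG-lipschitz_on UNIV G" "\<And>x. norm (G x) \<le> M" "\<And>x. infdist x Z \<le> r \<Longrightarrow> G x = F x"
    using cutoff_ext[of LF Z r F M] LF M r by (auto simp: N_def)
  have LG1: "(max LG 1)-lipschitz_on UNIV G" by (rule lipschitz_on_mono[OF G(1)]) auto
  define Ann where "Ann = {x. infdist x Z \<le> r} \<inter> {x. r/2 \<le> infdist x Z}"
  have clge: "closed {x. a \<le> infdist x Z}" for a
    by (rule closed_Collect_le) (auto intro: continuous_intros)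
  have cAnn: "compact Ann" unfolding Ann_def
    using compact_infdist_le[OF Zne cZ r(1)] clge[of "r/2"] by (intro compact_Int_closed) auto
  have AnnU: "Ann \<subseteq> U" using r rho r0 by (auto simp: Ann_def)
  have VposZ: "V x > 0" if "x \<in> U" "infdist x Z > 0" for x
  proof -
    have "V x \<noteq> 0" using that by (auto simp: Z_def)
    then show ?thesis using V0[of x] by simp
  qed
  obtain c0 where c0: "c0 > 0" "\<And>x. x \<in> Ann \<Longrightarrow> c0 \<le> V x"
  proof -
    have "\<exists>\<eta>>0. \<forall>x\<in>Ann. \<eta> \<le> V x"
      using r AnnU by (intro pos_min cAnn continuous_on_subset[OF Vcont]) (auto intro!: VposZ simp: Ann_def)
    then show thesis using that by blast
  qed
  define c where "c = c0 / 2"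
  have c: "c > 0" "c < c0" using c0 by (auto simp: c_def)
  have outside: "infdist x Z < r/2" if "infdist x Z \<le> r" "V x \<le> c" for x
  proof (rule ccontr)
    assume "\<not> ?thesis"
    then have "x \<in> Ann" using that by (auto simp: Ann_def)
    then show False using c0(2)[of x] c that(2) by linarith
  qed
  define W where "W = {x. infdist x Z < r}"
  have oW: "open W" unfolding W_def by (rule open_Collect_less) (auto intro: continuous_intros)
  have WU: "W \<subseteq> U" using r rho r0 by (auto simp: W_def)
  have ZW: "Z \<subseteq> W" using r by (auto simp: W_def)
  have partI: "(\<forall>t\<ge>0. 0 \<le> V (y t) \<and> V (y t) \<le> c) \<and> ((\<lambda>t. infdist (y t) Z) \<longlongrightarrow> 0) at_top"
    if ys: "is_solution F W {0..} y" "V (y 0) \<le> c" for y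
  proof -
    have yW: "y t \<in> W" and yd: "(y has_vector_derivative F (y t)) (at t within {0..})" if "t \<ge> 0" for t
      using ys(1) that by (auto simp: is_solution_def)
    have yU: "y t \<in> U" if "t \<ge> 0" for t using yW[OF that] WU by auto
    have ycont: "continuous_on {0..} y"
      unfolding continuous_on_eq_continuous_within using yd has_vector_derivative_continuous by (metis atLeast_iff)
    have yder: "(y has_vector_derivative F (y t)) (at t)" if "t > 0" for t
      using yd[of t] that at_within_interior[of t "{0..}"] by (simp add: interior_real_atLeast)
    have vcont: "continuous_on {0..} (\<lambda>t. V (y t))"
      by (rule continuous_on_compose2[OF Vcont ycont]) (auto intro: yU)
    have vder: "((\<lambda>t. V (y t)) has_real_derivative - ((norm (gr (y t)))^2)) (at t)" if "t > 0" for t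
      using chain[OF yder[OF that] yU] that by simp
    have vdec: "V (y b) \<le> V (y a) - m * (b - a)"
      if "0 \<le> a" "a \<le> b" "\<And>t. a < t \<Longrightarrow> t < b \<Longrightarrow> - ((norm (gr (y t)))^2) \<le> -m" for a b m
      by (rule decreasing_deriv[OF that(2), where g'="\<lambda>t. - ((norm (gr (y t)))^2)"])
        (use continuous_on_subset[OF vcont] that vder in auto)
    have vmono: "V (y b) \<le> V (y a)" if "0 \<le> a" "a \<le> b" for a b
      using vdec[of a b 0] that by simp
    have vc: "V (y t) \<le> c" if "t \<ge> 0" for t using vmono[of 0 t] ys(2) that by simp
    have small: "infdist (y t) Z < r/2" if "t \<ge> 0" for t
      using outside[OF _ vc[OF that]] yW[OF that] by (simp add: W_def)
    have N'c: "compact {x. infdist x Z \<le> r/2}" using compact_infdist_le[OF Zne cZ, of "r/2"] r by simp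
    have N'U: "{x. infdist x Z \<le> r/2} \<subseteq> U" using r rho r0 by auto
    have conv1: "\<exists>T\<ge>0. V (y T) < \<eta>" if eta: "\<eta> > 0" for \<eta>
    proof (rule ccontr)
      assume "\<not> ?thesis"
      then have ge: "\<eta> \<le> V (y t)" if "t \<ge> 0" for t using that by force
      define Q where "Q = {x. infdist x Z \<le> r/2} \<inter> ({x. infdist x Z \<le> r/2} \<inter> V -` {\<eta>..})"
      have cQ: "compact Q" unfolding Q_def
        by (intro compact_Int_closed N'c continuous_closed_preimage continuous_on_subset[OF Vcont N'U]
              compact_imp_closed[OF N'c] closed_atLeast)
      have QU: "Q \<subseteq> U" using N'U by (auto simp: Q_def)
      have "\<exists>m>0. \<forall>x\<in>Q. m \<le> (norm (gr x))^2"
      proof (rule pos_min[OF cQ])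
        show "continuous_on Q (\<lambda>x. (norm (gr x))^2)"
          by (intro continuous_intros continuous_on_subset[OF grcont QU])
        fix x assume "x \<in> Q"
        then have "infdist x Z < \<rho>" "V x > 0" using r eta by (auto simp: Q_def)
        then show "0 < (norm (gr x))^2" using gr_ne by simp
      qed
      then obtain m where m: "m > 0" "\<And>x. x \<in> Q \<Longrightarrow> m \<le> (norm (gr x))^2" by blast
      have yQ: "y t \<in> Q" if "t \<ge> 0" for t using small[OF that] ge[OF that] by (simp add: Q_def less_imp_le)
      define T where "T = (c + 1) / m"
      have T0: "T \<ge> 0" using c m by (simp add: T_def)
      have "V (y T) \<le> V (y 0) - m * (T - 0)"
        by (rule vdec) (use T0 yQ m in \<open>auto simp: less_imp_le\<close>)
      also have "m * (T - 0) = c + 1" using m by (simp add: T_def)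
      finally have "V (y T) < 0" using ys(2) by simp
      then show False using V0 by (simp add: not_less[symmetric])
    qed
    have conv: "((\<lambda>t. infdist (y t) Z) \<longlongrightarrow> 0) at_top"
    proof (rule tendstoI)
      fix e :: real assume e: "e > 0"
      define Q where "Q = {x. infdist x Z \<le> r/2} \<inter> {x. e \<le> infdist x Z}"
      have cQ: "compact Q" unfolding Q_def using N'c clge by (intro compact_Int_closed) auto
      have QU: "Q \<subseteq> U" using N'U by (auto simp: Q_def)
      have "\<exists>\<eta>>0. \<forall>x\<in>Q. \<eta> \<le> V x"
        using QU e by (intro pos_min cQ continuous_on_subset[OF Vcont]) (auto intro!: VposZ simp: Q_def)
      then obtain \<eta> where eta: "\<eta> > 0" "\<And>x. x \<in> Q \<Longrightarrow> \<eta> \<le> V x" by blast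
      obtain T where T: "T \<ge> 0" "V (y T) < \<eta>" using conv1[OF eta(1)] by blast
      show "\<forall>\<^sub>F t in at_top. dist (infdist (y t) Z) 0 < e"
        unfolding eventually_at_top_linorder
      proof (intro exI allI impI)
        fix t assume "t \<ge> T"
        then have "V (y t) < \<eta>" using vmono[of T t] T by simp
        then have "y t \<notin> Q" using eta(2) by force
        moreover have "infdist (y t) Z < r/2" using small \<open>t \<ge> T\<close> T by simp
        ultimately show "dist (infdist (y t) Z) 0 < e" by (simp add: Q_def infdist_nonneg)
      qed
    qed
    show ?thesis using V0 vc conv by blast
  qed
  have partII: "\<exists>y. y 0 = p \<and> is_solution F W {0..} y" if pW: "p \<in> W" "V p \<le> c" for p
  proof -
    have p_small: "infdist p Z < r/2" using outside[OF _ pW(2)] pW(1) by (simp add: W_def)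
    obtain y where y0: "y 0 = p" and yd: "\<And>t. t \<ge> 0 \<Longrightarrow> (y has_vector_derivative G (y t)) (at t within {0..})"
      using picard_global[OF LG1 _ G(2), of p] by (metis max.strict_coboundedI2 zero_less_one)
    have ycont: "continuous_on {0..} y"
      unfolding continuous_on_eq_continuous_within using yd has_vector_derivative_continuous by (metis atLeast_iff)
    have idcont: "continuous_on {0..} (\<lambda>t. infdist (y t) Z)" by (intro continuous_intros ycont)
    have small: "infdist (y t) Z < r/2" if "t \<ge> 0" for t
    proof (rule ccontr)
      assume "\<not> ?thesis"
      then have t0: "t \<in> {0..} \<inter> (\<lambda>t. infdist (y t) Z) -` {r/2..}" using that by auto
      define S where "S = {0..} \<inter> (\<lambda>t. infdist (y t) Z) -` {r/2..}"
      have clS: "closed S" unfolding S_def by (rule continuous_closed_preimage[OF idcont]) auto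
      have Sne: "S \<noteq> {}" using t0 by (auto simp: S_def)
      have bS: "bdd_below S" by (rule bdd_belowI[of _ 0]) (auto simp: S_def)
      define t1 where "t1 = Inf S"
      have t1S: "t1 \<in> S" unfolding t1_def by (rule closed_contains_Inf[OF Sne bS clS])
      have before: "infdist (y s) Z < r/2" if "0 \<le> s" "s < t1" for s
      proof (rule ccontr)
        assume "\<not> ?thesis"
        then have "s \<in> S" using that by (auto simp: S_def)
        then have "t1 \<le> s" unfolding t1_def using bS by (rule cInf_lower)
        then show False using that by simp
      qed
      have t1pos: "t1 > 0"
      proof -
        have "t1 \<ge> 0" using t1S by (auto simp: S_def)
        moreover have "t1 \<noteq> 0" using t1S p_small y0 by (auto simp: S_def)
        ultimately show ?thesis by simp
      qed
      have at1: "infdist (y t1) Z \<le> r/2"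
      proof (rule continuous_le_on_closure[where S="{0..<t1}" and f="\<lambda>t. infdist (y t) Z"])
        show "continuous_on (closure {0..<t1}) (\<lambda>t. infdist (y t) Z)"
          using closure_atLeastLessThan[OF t1pos] by (auto intro: continuous_on_subset[OF idcont])
        show "t1 \<in> closure {0..<t1}" using closure_atLeastLessThan[OF t1pos] t1pos by simp
        show "\<And>x. x \<in> {0..<t1} \<Longrightarrow> infdist (y x) Z \<le> r/2" using before by (auto simp: less_imp_le)
      qed
      have "y t1 \<in> Ann" using t1S at1 r by (auto simp: S_def Ann_def)
      then have big: "c0 \<le> V (y t1)" by (rule c0(2))
      have sm: "infdist (y s) Z \<le> r/2" if "0 \<le> s" "s \<le> t1" for s
        using before[of s] at1 that by (cases "s = t1") auto
      have yU: "y s \<in> U" if "0 \<le> s" "s \<le> t1" for s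
        using sm[OF that] r rho r0 by simp
      have vcont: "continuous_on {0..t1} (\<lambda>t. V (y t))"
        by (rule continuous_on_compose2[OF Vcont continuous_on_subset[OF ycont]]) (auto intro: yU)
      have vder: "((\<lambda>t. V (y t)) has_real_derivative - ((norm (gr (y s)))^2)) (at s)" if "0 < s" "s < t1" for s
      proof -
        have "(y has_vector_derivative G (y s)) (at s)"
          using yd[of s] that at_within_interior[of s "{0..}"] by (simp add: interior_real_atLeast)
        moreover have "G (y s) = F (y s)" using G(3) before[of s] that r by simp
        ultimately show ?thesis using chain[of y s] yU[of s] that by simp
      qed
      have "V (y t1) \<le> V (y 0) - 0 * (t1 - 0)"
        by (rule decreasing_deriv[where g'="\<lambda>s. - ((norm (gr (y s)))^2)"])
          (use t1pos vcont vder in auto)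
      then show False using big y0 pW(2) c by simp
    qed
    show ?thesis
    proof (intro exI conjI)
      show "y 0 = p" by (rule y0)
      show "is_solution F W {0..} y"
        unfolding is_solution_def
      proof
        fix t :: real assume "t \<in> {0..}"
        then have t: "t \<ge> 0" by simp
        have "G (y t) = F (y t)" using G(3) small[OF t] r by simp
        then show "y t \<in> W \<and> (y has_vector_derivative F (y t)) (at t within {0..})"
          using small[OF t] yd[OF t] r by (simp add: W_def)
      qed
    qed
  qed
  have "\<exists>c>0. \<exists>W. open W \<and> W \<subseteq> U \<and> Z \<subseteq> W \<and>
    (\<forall>p\<in>{x\<in>W. 0 \<le> V x \<and> V x \<le> c}.
       (\<exists>y. y 0 = p \<and> is_solution F W {0..} y) \<and>
       (\<forall>y. y 0 = p \<and> is_solution F W {0..} y \<longrightarrow>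
          (\<forall>t\<ge>0. 0 \<le> V (y t) \<and> V (y t) \<le> c) \<and>
          ((\<lambda>t. infdist (y t) Z) \<longlongrightarrow> 0) at_top))"
    using c(1) oW WU ZW partI partII by (intro exI[of _ c] conjI exI[of _ W]) auto
  then show ?thesis unfolding Z_def F_def[abs_def] .
qed

end
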